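(* Let $a\in(0,1)$, $\kappa_1\in(a,1)$, $\kappa_2\in(0,1)$ and $r\ge1$ satisfy simultaneously $r\le \dfrac{as}{\sqrt{5\log(2/(1-a/\kappa_1))}}$ and $\dfrac{4}{\kappa_2}\le r\le\dfrac{as}{\sqrt{5\log(8/\kappa_2)}}$. Let $y_1,\dots,y_n\in\mathbb{R}^d$ be any points and suppose $$S_{a,r}\le \|\theta^*\|\min\{a(1/\kappa_1-1),\ r(1-\kappa_2)\}.$$ Then $M_n(\mathcal{D}_{a,r})\subseteq\mathcal{D}_{a,r}$, i.e. $M_n$ maps $\mathcal{D}_{a,r}$ into itself.
   Context: Fix $d\ge1$, $\sigma>0$ and $\theta^*\in\mathbb{R}^d\setminus\{0\}$. Let $Y$ be distributed according to the mixture $\tfrac12 N(\theta^*,\sigma^2I_d)+\tfrac12 N(-\theta^*,\sigma^2I_d)$. Let $\omega(t):=1/(1+e^{-2t})$. The population EM operator is $M(\theta):=2\,\mathbb{E}\big[Y\,\omega(\langle\theta,Y\rangle/\sigma^2)\big]$, and the sample EM operator built from points $y_1,\dots,y_n$ is $M_n(\theta):=\frac2n\sum_{i=1}^n y_i\,\omega(\langle y_i,\theta\rangle/\sigma^2)-\frac1n\sum_{i=1}^n y_i$. The signal-to-noise ratio is $s:=\|\theta^*\|/\sigma$. For $a\in(0,1)$ and $r\ge1$ define $\mathcal{H}_a:=\{\theta:\langle\theta,\theta^*\rangle\ge a\|\theta^*\|^2\}$, $\mathcal{B}_r:=\{\theta:\|\theta\|\le r\|\theta^*\|\}$, $\mathcal{D}_{a,r}:=\mathcal{H}_a\cap\mathcal{B}_r$,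 and $S_{a,r}:=\sup_{\theta\in\mathcal{D}_{a,r}}\|M_n(\theta)-M(\theta)\|$. *)

theory Defs
  imports "HOL-Analysis.Analysis"
begin

definition omega :: "real \<Rightarrow> real" where
  "omega t = 1 / (1 + exp (-2 * t))"

definition gauss_pdf :: "real \<Rightarrow> 'a::euclidean_space \<Rightarrow> 'a \<Rightarrow> real" where
  "gauss_pdf \<sigma> \<mu> y =
     (2 * pi * \<sigma>\<^sup>2) powr (- real DIM('a) / 2) * exp (- (norm (y - \<mu>))\<^sup>2 / (2 * \<sigma>\<^sup>2))"

definition mix_law :: "real \<Rightarrow> 'a::euclidean_space \<Rightarrow> 'a measure" where
  "mix_law \<sigma> \<theta>s = density lborel
     (\<lambda>y. ennreal (1/2 * gauss_pdf \<sigma> \<theta>s y + 1/2 * gauss_pdf \<sigma> (- \<theta>s) y))"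

definition M_pop :: "real \<Rightarrow> 'a::euclidean_space \<Rightarrow> 'a \<Rightarrow> 'a" where
  "M_pop \<sigma> \<theta>s \<theta> = 2 *\<^sub>R (\<integral>y. omega ((\<theta> \<bullet> y) / \<sigma>\<^sup>2) *\<^sub>R y \<partial>mix_law \<sigma> \<theta>s)"

definition M_samp :: "real \<Rightarrow> (nat \<Rightarrow> 'a::euclidean_space) \<Rightarrow> nat \<Rightarrow> 'a \<Rightarrow> 'a" where
  "M_samp \<sigma> y n \<theta> =
     (2 / real n) *\<^sub>R (\<Sum>i<n. omega ((y i \<bullet> \<theta>) / \<sigma>\<^sup>2) *\<^sub>R y i)
     - (1 / real n) *\<^sub>R (\<Sum>i<n. y i)"

definition H_set :: "'a::euclidean_space \<Rightarrow> real \<Rightarrow> 'a set" where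
  "H_set \<theta>s a = {\<theta>. \<theta> \<bullet> \<theta>s \<ge> a * (norm \<theta>s)\<^sup>2}"

definition B_set :: "'a::euclidean_space \<Rightarrow> real \<Rightarrow> 'a set" where
  "B_set \<theta>s r = {\<theta>. norm \<theta> \<le> r * norm \<theta>s}"

definition D_set :: "'a::euclidean_space \<Rightarrow> real \<Rightarrow> real \<Rightarrow> 'a set" where
  "D_set \<theta>s a r = H_set \<theta>s a \<inter> B_set \<theta>s r"

definition S_dev :: "real \<Rightarrow> 'a::euclidean_space \<Rightarrow> (nat \<Rightarrow> 'a) \<Rightarrow> nat \<Rightarrow> real \<Rightarrow> real \<Rightarrow> real" where
  "S_dev \<sigma> \<theta>s y n a r =
     (SUP \<theta>\<in>D_set \<theta>s a r. norm (M_samp \<sigma> y n \<theta> - M_pop \<sigma> \<theta>s \<theta>))"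

end

theory Submission
  imports Defs "HOL-Probability.Probability"
begin


lemma powr_lem:
  fixes c :: real assumes c: "c > 0"
  shows "c powr (- real n / 2) = (1 / sqrt c) ^ n"
proof -
  have "c powr (- real n / 2) = (c powr (1/2)) powr (- real n)"
    by (simp add: powr_powr)
  also have "\<dots> = inverse ((c powr (1/2)) powr real n)"
    by (rule powr_minus)
  also have "(c powr (1/2)) powr real n = (sqrt c) ^ n"
    using c by (simp add: powr_half_sqrt powr_realpow)
  finally show ?thesis by (simp add: power_one_over inverse_eq_divide)
qed

lemma norm_sq_basis: "(norm (x::'a::euclidean_space))^2 = (\<Sum>b\<in>Basis. (x\<bullet>b)^2)"
  unfolding power2_norm_eq_inner by (subst euclidean_inner) (simp add: power2_eq_square)


lemma gauss_prod:
  fixes \<mu> y :: "'a::euclidean_space"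
  assumes "\<sigma> > 0"
  shows "gauss_pdf \<sigma> \<mu> y = (\<Prod>b\<in>Basis. normal_density (\<mu>\<bullet>b) \<sigma> (y\<bullet>b))"
proof -
  define c where "c = 2*pi*\<sigma>\<^sup>2"
  have c: "c > 0" using assms by (simp add: c_def)
  have 1: "c powr (- real DIM('a) / 2) = (\<Prod>b\<in>(Basis::'a set). 1 / sqrt c)"
    using powr_lem[OF c] by (simp add: prod_constant)
  have 2: "exp (- (norm (y - \<mu>))\<^sup>2 / (2 * \<sigma>\<^sup>2)) = (\<Prod>b\<in>Basis. exp (- (y\<bullet>b - \<mu>\<bullet>b)\<^sup>2 / (2 * \<sigma>\<^sup>2)))"
  proof -
    have "- (norm (y - \<mu>))\<^sup>2 / (2 * \<sigma>\<^sup>2) = (\<Sum>b\<in>Basis. - (y\<bullet>b - \<mu>\<bullet>b)\<^sup>2 / (2 * \<sigma>\<^sup>2))"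
      unfolding norm_sq_basis[of "y-\<mu>"] sum_divide_distrib[symmetric] sum_negf inner_diff_left ..
    then show ?thesis by (simp add: exp_sum)
  qed
  have "gauss_pdf \<sigma> \<mu> y = (\<Prod>b\<in>(Basis::'a set). 1 / sqrt c) * (\<Prod>b\<in>Basis. exp (- (y\<bullet>b - \<mu>\<bullet>b)\<^sup>2 / (2 * \<sigma>\<^sup>2)))"
    unfolding gauss_pdf_def 1[unfolded c_def] 2 c_def ..
  also have "\<dots> = (\<Prod>b\<in>Basis. normal_density (\<mu>\<bullet>b) \<sigma> (y\<bullet>b))"
    unfolding prod.distrib[symmetric] normal_density_def c_def
    by (rule prod.cong) (auto simp: power2_commute)
  finally show ?thesis .
qed

lemma complete_sq:
  assumes "\<sigma> > 0"
  shows "exp (v * x) * normal_density m \<sigma> x = exp (v * m + \<sigma>\<^sup>2 * v\<^sup>2 / 2) * normal_density (m + \<sigma>\<^sup>2 * v) \<sigma> x"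
proof -
  have "v * x + (-(x-m)\<^sup>2/(2*\<sigma>\<^sup>2)) = (v * m + \<sigma>\<^sup>2 * v\<^sup>2 / 2) + (-(x - (m + \<sigma>\<^sup>2 * v))\<^sup>2/(2*\<sigma>\<^sup>2))"
    using assms by (simp add: field_simps power2_eq_square)
  then have "exp (v * x) * exp (-(x-m)\<^sup>2/(2*\<sigma>\<^sup>2)) = exp (v * m + \<sigma>\<^sup>2 * v\<^sup>2 / 2) * exp (-(x - (m + \<sigma>\<^sup>2 * v))\<^sup>2/(2*\<sigma>\<^sup>2))"
    by (metis exp_add)
  then show ?thesis unfolding normal_density_def
    by (metis mult.left_commute)
qed


lemma nn_normal: "\<sigma> > 0 \<Longrightarrow> (\<integral>\<^sup>+x. ennreal (normal_density m \<sigma> x) \<partial>lborel) = 1"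
  by (subst nn_integral_eq_integral) (auto intro: integrable_normal_density simp: integral_normal_density)

lemma mgf_gauss:
  fixes \<mu> v :: "'a::euclidean_space"
  assumes "\<sigma> > 0"
  shows "(\<integral>\<^sup>+y. ennreal (exp (v\<bullet>y) * gauss_pdf \<sigma> \<mu> y) \<partial>lborel) = ennreal (exp (v\<bullet>\<mu> + \<sigma>\<^sup>2*(norm v)\<^sup>2/2))"
proof -
  define f where "f b x = exp ((v\<bullet>b) * x) * normal_density (\<mu>\<bullet>b) \<sigma> x" for b x
  have eq: "exp (v\<bullet>y) * gauss_pdf \<sigma> \<mu> y = (\<Prod>b\<in>Basis. f b (y\<bullet>b))" for y
  proof -
    have "exp (v\<bullet>y) = (\<Prod>b\<in>Basis. exp ((v\<bullet>b) * (y\<bullet>b)))"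
      by (subst euclidean_inner) (simp add: exp_sum)
    then show ?thesis unfolding gauss_prod[OF assms] f_def prod.distrib by simp
  qed
  have "(\<integral>\<^sup>+y. ennreal (exp (v\<bullet>y) * gauss_pdf \<sigma> \<mu> y) \<partial>lborel) = (\<Prod>b\<in>Basis. (\<integral>\<^sup>+x. f b x \<partial>lborel))"
  proof -
    have "(\<lambda>y. ennreal (\<Prod>b\<in>Basis. f b (y\<bullet>b))) = (\<lambda>y. (\<Prod>b\<in>Basis. ennreal (f b (y\<bullet>b))))"
      by (subst prod_ennreal) (auto simp: f_def)
    then show ?thesis
      unfolding eq by (simp only:) (rule nn_integral_lborel_prod, auto simp: f_def)
  qed
  also have "\<dots> = (\<Prod>b\<in>Basis. ennreal (exp ((v\<bullet>b)*(\<mu>\<bullet>b) + \<sigma>\<^sup>2*(v\<bullet>b)\<^sup>2/2)))"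
  proof (rule prod.cong[OF refl])
    fix b :: 'a
    have "(\<integral>\<^sup>+x. f b x \<partial>lborel) = (\<integral>\<^sup>+x. ennreal (exp ((v\<bullet>b)*(\<mu>\<bullet>b) + \<sigma>\<^sup>2*(v\<bullet>b)\<^sup>2/2)) * ennreal (normal_density (\<mu>\<bullet>b + \<sigma>\<^sup>2*(v\<bullet>b)) \<sigma> x) \<partial>lborel)"
      unfolding f_def complete_sq[OF assms] by (simp add: ennreal_mult)
    also have "\<dots> = ennreal (exp ((v\<bullet>b)*(\<mu>\<bullet>b) + \<sigma>\<^sup>2*(v\<bullet>b)\<^sup>2/2))"
      using assms by (simp add: nn_integral_cmult nn_normal)
    finally show "(\<integral>\<^sup>+x. f b x \<partial>lborel) = ennreal (exp ((v\<bullet>b)*(\<mu>\<bullet>b) + \<sigma>\<^sup>2*(v\<bullet>b)\<^sup>2/2))" .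
  qed
  also have "\<dots> = ennreal (\<Prod>b\<in>Basis. exp ((v\<bullet>b)*(\<mu>\<bullet>b) + \<sigma>\<^sup>2*(v\<bullet>b)\<^sup>2/2))"
    by (simp add: prod_ennreal)
  also have "(\<Prod>b\<in>Basis. exp ((v\<bullet>b)*(\<mu>\<bullet>b) + \<sigma>\<^sup>2*(v\<bullet>b)\<^sup>2/2)) = exp (v\<bullet>\<mu> + \<sigma>\<^sup>2*(norm v)\<^sup>2/2)"
  proof -
    have "v\<bullet>\<mu> + \<sigma>\<^sup>2*(norm v)\<^sup>2/2 = (\<Sum>b\<in>Basis. (v\<bullet>b)*(\<mu>\<bullet>b) + \<sigma>\<^sup>2*(v\<bullet>b)\<^sup>2/2)"
      unfolding norm_sq_basis[of v] sum.distrib sum_distrib_left sum_divide_distrib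
      by (subst euclidean_inner) simp
    then show ?thesis by (simp add: exp_sum)
  qed
  finally show ?thesis .
qed


lemma gauss_meas[measurable]: "gauss_pdf \<sigma> \<mu> \<in> borel_measurable borel"
  unfolding gauss_pdf_def[abs_def] by measurable

lemma gauss_nonneg: "0 \<le> gauss_pdf \<sigma> \<mu> y"
  unfolding gauss_pdf_def by simp

lemma mgf_int:
  fixes \<mu> v :: "'a::euclidean_space"
  assumes "\<sigma> > 0"
  shows "integrable lborel (\<lambda>y. exp (v\<bullet>y) * gauss_pdf \<sigma> \<mu> y)"
    and "(\<integral>y. exp (v\<bullet>y) * gauss_pdf \<sigma> \<mu> y \<partial>lborel) = exp (v\<bullet>\<mu> + \<sigma>\<^sup>2*(norm v)\<^sup>2/2)"
proof -
  show "integrable lborel (\<lambda>y. exp (v\<bullet>y) * gauss_pdf \<sigma> \<mu> y)"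
    by (rule integrableI_nonneg) (auto simp: gauss_nonneg mgf_gauss[OF assms])
  show "(\<integral>y. exp (v\<bullet>y) * gauss_pdf \<sigma> \<mu> y \<partial>lborel) = exp (v\<bullet>\<mu> + \<sigma>\<^sup>2*(norm v)\<^sup>2/2)"
    by (subst integral_eq_nn_integral) (auto simp: gauss_nonneg mgf_gauss[OF assms])
qed

lemma gauss_int:
  fixes \<mu> :: "'a::euclidean_space"
  assumes "\<sigma> > 0"
  shows "integrable lborel (gauss_pdf \<sigma> \<mu>)" "(\<integral>y. gauss_pdf \<sigma> \<mu> y \<partial>lborel) = 1"
  using mgf_int[OF assms, of 0 \<mu>] by simp_all

lemma reflect_integral:
  fixes F :: "'a::euclidean_space \<Rightarrow> real"
  assumes [measurable]: "F \<in> borel_measurable borel"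
  shows "(\<integral>y. F y \<partial>lborel) = (\<integral>y. F (t - y) \<partial>lborel)"
proof -
  have "lborel = density (distr lborel borel (\<lambda>x. t + (-1) *\<^sub>R x)) (\<lambda>_. \<bar>-1::real\<bar>^DIM('a))"
    by (rule lborel_affine) simp
  then have eq: "lborel = density (distr lborel borel (\<lambda>x::'a. t - x)) (\<lambda>_. 1)"
    by simp
  have "(\<integral>y. F y \<partial>lborel) = (\<integral>y. F y \<partial>density (distr lborel borel (\<lambda>x::'a. t - x)) (\<lambda>_. 1))"
    by (subst eq) (rule refl)
  also have "\<dots> = (\<integral>y. F y \<partial>distr lborel borel (\<lambda>x::'a. t - x))"
    by (simp only: density_1)
  also have "\<dots> = (\<integral>y. F (t - y) \<partial>lborel)"
    by (subst integral_distr) auto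
  finally show ?thesis .
qed

lemma abs_le_exps: "\<bar>x::real\<bar> \<le> exp x + exp (- x)"
proof -
  have "x \<le> exp x" "- x \<le> exp (-x)" using exp_ge_add_one_self[of x] exp_ge_add_one_self[of "-x"] by linarith+
  then show ?thesis by (smt (verit) exp_gt_zero)
qed

lemma lin_int:
  fixes \<mu> u :: "'a::euclidean_space"
  assumes "\<sigma> > 0"
  shows "integrable lborel (\<lambda>y. gauss_pdf \<sigma> \<mu> y * (y\<bullet>u))"
proof (rule Bochner_Integration.integrable_bound[where f="\<lambda>y. exp (u\<bullet>y) * gauss_pdf \<sigma> \<mu> y + exp ((-u)\<bullet>y) * gauss_pdf \<sigma> \<mu> y"])
  show "integrable lborel (\<lambda>y. exp (u\<bullet>y) * gauss_pdf \<sigma> \<mu> y + exp ((-u)\<bullet>y) * gauss_pdf \<sigma> \<mu> y)"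
    using mgf_int(1)[OF assms, of u \<mu>] mgf_int(1)[OF assms, of "-u" \<mu>] by (rule Bochner_Integration.integrable_add)
  show "AE y in lborel. norm (gauss_pdf \<sigma> \<mu> y * (y\<bullet>u)) \<le> norm (exp (u\<bullet>y) * gauss_pdf \<sigma> \<mu> y + exp ((-u)\<bullet>y) * gauss_pdf \<sigma> \<mu> y)"
  proof (rule AE_I2)
    fix y
    have "\<bar>y\<bullet>u\<bar> \<le> exp (u\<bullet>y) + exp ((-u)\<bullet>y)" using abs_le_exps[of "y\<bullet>u"] by (simp add: inner_commute)
    then have "gauss_pdf \<sigma> \<mu> y * \<bar>y\<bullet>u\<bar> \<le> gauss_pdf \<sigma> \<mu> y * (exp (u\<bullet>y) + exp ((-u)\<bullet>y))"
      by (rule mult_left_mono) (rule gauss_nonneg)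
    then show "norm (gauss_pdf \<sigma> \<mu> y * (y\<bullet>u)) \<le> norm (exp (u\<bullet>y) * gauss_pdf \<sigma> \<mu> y + exp ((-u)\<bullet>y) * gauss_pdf \<sigma> \<mu> y)"
      using gauss_nonneg[of \<sigma> \<mu> y] by (simp add: abs_mult algebra_simps)
  qed
qed simp

lemma mean_gauss:
  fixes \<mu> u :: "'a::euclidean_space"
  assumes "\<sigma> > 0"
  shows "(\<integral>y. gauss_pdf \<sigma> \<mu> y * (y\<bullet>u) \<partial>lborel) = \<mu>\<bullet>u"
proof -
  define F where "F y = gauss_pdf \<sigma> \<mu> y * ((y - \<mu>)\<bullet>u)" for y
  have [measurable]: "F \<in> borel_measurable borel" unfolding F_def[abs_def] by measurable
  have sym: "F (2 *\<^sub>R \<mu> - y) = - F y" for y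
  proof -
    have "gauss_pdf \<sigma> \<mu> (2 *\<^sub>R \<mu> - y) = gauss_pdf \<sigma> \<mu> y"
      unfolding gauss_pdf_def by (simp add: norm_minus_commute algebra_simps scaleR_2)
    moreover have "(2 *\<^sub>R \<mu> - y - \<mu>)\<bullet>u = - ((y - \<mu>)\<bullet>u)" by (simp add: algebra_simps scaleR_2 inner_diff_left)
    ultimately show ?thesis unfolding F_def by (simp only:)
  qed
  have "(\<integral>y. F y \<partial>lborel) = (\<integral>y. F (2 *\<^sub>R \<mu> - y) \<partial>lborel)" by (rule reflect_integral) simp
  also have "\<dots> = - (\<integral>y. F y \<partial>lborel)" unfolding sym by simp
  finally have F0: "(\<integral>y. F y \<partial>lborel) = 0" by simp
  have "(\<lambda>y. gauss_pdf \<sigma> \<mu> y * (y\<bullet>u)) = (\<lambda>y. F y + (\<mu>\<bullet>u) * gauss_pdf \<sigma> \<mu> y)"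
    unfolding F_def by (auto simp: inner_diff_left algebra_simps)
  moreover have "integrable lborel F"
  proof -
    have "(\<lambda>y. gauss_pdf \<sigma> \<mu> y * (y\<bullet>u) - (\<mu>\<bullet>u) * gauss_pdf \<sigma> \<mu> y) = F"
      unfolding F_def by (auto simp: inner_diff_left algebra_simps)
    moreover have "integrable lborel (\<lambda>y. gauss_pdf \<sigma> \<mu> y * (y\<bullet>u) - (\<mu>\<bullet>u) * gauss_pdf \<sigma> \<mu> y)"
      by (intro Bochner_Integration.integrable_diff integrable_mult_right lin_int[OF assms] gauss_int(1)[OF assms])
    ultimately show ?thesis by simp
  qed
  ultimately show ?thesis using F0 gauss_int[OF assms, of \<mu>]
    by (simp add: Bochner_Integration.integral_add)
qed


lemma omega_pos: "0 < omega t" unfolding omega_def by (simp add: add_pos_pos)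
lemma omega_le1: "omega t \<le> 1" unfolding omega_def by (simp add: add_pos_pos)
lemma omega_meas[measurable]: "omega \<in> borel_measurable borel"
  unfolding omega_def[abs_def] by measurable

lemma w_int:
  fixes \<mu> u :: "'a::euclidean_space"
  assumes "\<sigma> > 0" and [measurable]: "w \<in> borel_measurable borel" and w: "\<And>y. \<bar>w y\<bar> \<le> 1"
  shows "integrable lborel (\<lambda>y. w y * gauss_pdf \<sigma> \<mu> y * (y\<bullet>u))"
proof (rule Bochner_Integration.integrable_bound[where f="\<lambda>y. gauss_pdf \<sigma> \<mu> y * (y\<bullet>u)"])
  show "integrable lborel (\<lambda>y. gauss_pdf \<sigma> \<mu> y * (y\<bullet>u))" by (rule lin_int[OF assms(1)])
  show "AE y in lborel. norm (w y * gauss_pdf \<sigma> \<mu> y * (y\<bullet>u)) \<le> norm (gauss_pdf \<sigma> \<mu> y * (y\<bullet>u))"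
  proof (rule AE_I2)
    fix y
    have "\<bar>w y\<bar> * \<bar>gauss_pdf \<sigma> \<mu> y * (y\<bullet>u)\<bar> \<le> 1 * \<bar>gauss_pdf \<sigma> \<mu> y * (y\<bullet>u)\<bar>"
      by (rule mult_right_mono[OF w]) simp
    then show "norm (w y * gauss_pdf \<sigma> \<mu> y * (y\<bullet>u)) \<le> norm (gauss_pdf \<sigma> \<mu> y * (y\<bullet>u))"
      by (simp add: abs_mult mult.assoc)
  qed
qed simp

lemma Mpop_inner:
  fixes \<theta>s \<theta> u :: "'a::euclidean_space"
  assumes "\<sigma> > 0"
  shows "M_pop \<sigma> \<theta>s \<theta> \<bullet> u = (\<integral>y. omega ((\<theta>\<bullet>y)/\<sigma>\<^sup>2) * gauss_pdf \<sigma> \<theta>s y * (y\<bullet>u) \<partial>lborel)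
          + (\<integral>y. omega ((\<theta>\<bullet>y)/\<sigma>\<^sup>2) * gauss_pdf \<sigma> (-\<theta>s) y * (y\<bullet>u) \<partial>lborel)"
proof -
  define w where "w y = omega ((\<theta>\<bullet>y)/\<sigma>\<^sup>2)" for y :: 'a
  have [measurable]: "w \<in> borel_measurable borel" unfolding w_def[abs_def] by measurable
  have wb: "\<bar>w y\<bar> \<le> 1" for y using omega_pos omega_le1 unfolding w_def by (simp add: abs_le_iff) (smt (verit))
  define p where "p y = 1/2 * gauss_pdf \<sigma> \<theta>s y + 1/2 * gauss_pdf \<sigma> (-\<theta>s) y" for y :: 'a
  have [measurable]: "p \<in> borel_measurable borel" unfolding p_def[abs_def] by measurable
  have pnn: "0 \<le> p y" for y unfolding p_def using gauss_nonneg[of \<sigma> \<theta>s y] gauss_nonneg[of \<sigma> "-\<theta>s" y] by simp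
  have 1: "M_pop \<sigma> \<theta>s \<theta> = 2 *\<^sub>R (\<integral>y. p y *\<^sub>R (w y *\<^sub>R y) \<partial>lborel)"
    unfolding M_pop_def mix_law_def w_def[symmetric] p_def[symmetric]
    by (subst integral_density) (auto simp: pnn)
  have ints: "integrable lborel (\<lambda>y. p y * w y * (y\<bullet>v))" for v
  proof -
    have "(\<lambda>y. p y * w y * (y\<bullet>v)) = (\<lambda>y. 1/2 * (w y * gauss_pdf \<sigma> \<theta>s y * (y\<bullet>v)) + 1/2 * (w y * gauss_pdf \<sigma> (-\<theta>s) y * (y\<bullet>v)))"
      unfolding p_def by (auto simp: algebra_simps)
    then show ?thesis
      by (simp only:) (intro Bochner_Integration.integrable_add integrable_mult_right w_int[OF assms] wb; simp)
  qed
  have intv: "integrable lborel (\<lambda>y. p y *\<^sub>R (w y *\<^sub>R y))"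
  proof -
    have "(\<lambda>y. p y *\<^sub>R (w y *\<^sub>R y)) = (\<lambda>y. \<Sum>b\<in>Basis. (p y * w y * (y\<bullet>b)) *\<^sub>R b)"
    proof
      fix y
      have "p y *\<^sub>R (w y *\<^sub>R y) = (p y * w y) *\<^sub>R (\<Sum>b\<in>Basis. (y\<bullet>b) *\<^sub>R b)"
        by (simp add: euclidean_representation)
      also have "\<dots> = (\<Sum>b\<in>Basis. (p y * w y * (y\<bullet>b)) *\<^sub>R b)"
        by (simp add: scaleR_sum_right)
      finally show "p y *\<^sub>R (w y *\<^sub>R y) = (\<Sum>b\<in>Basis. (p y * w y * (y\<bullet>b)) *\<^sub>R b)" .
    qed
    then show ?thesis
      by (simp only:) (intro Bochner_Integration.integrable_sum integrable_scaleR_left ints)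
  qed
  have "M_pop \<sigma> \<theta>s \<theta> \<bullet> u = 2 * (\<integral>y. p y *\<^sub>R (w y *\<^sub>R y) \<bullet> u \<partial>lborel)"
  proof -
    have e: "(\<integral>y. p y *\<^sub>R (w y *\<^sub>R y) \<partial>lborel) \<bullet> u = (\<integral>y. p y *\<^sub>R (w y *\<^sub>R y) \<bullet> u \<partial>lborel)"
      by (rule integral_inner_left[symmetric]) (rule intv)
    show ?thesis unfolding 1 by (simp only: inner_scaleR_left e)
  qed
  also have "(\<lambda>y. p y *\<^sub>R (w y *\<^sub>R y) \<bullet> u) = (\<lambda>y. 1/2 * (w y * gauss_pdf \<sigma> \<theta>s y * (y\<bullet>u)) + 1/2 * (w y * gauss_pdf \<sigma> (-\<theta>s) y * (y\<bullet>u)))"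
    unfolding p_def by (auto simp: algebra_simps)
  also have "2 * (\<integral>y. 1/2 * (w y * gauss_pdf \<sigma> \<theta>s y * (y\<bullet>u)) + 1/2 * (w y * gauss_pdf \<sigma> (-\<theta>s) y * (y\<bullet>u)) \<partial>lborel)
     = (\<integral>y. w y * gauss_pdf \<sigma> \<theta>s y * (y\<bullet>u) \<partial>lborel) + (\<integral>y. w y * gauss_pdf \<sigma> (-\<theta>s) y * (y\<bullet>u) \<partial>lborel)"
    using w_int[OF assms, of w, OF _ wb] by (subst Bochner_Integration.integral_add) auto
  finally show ?thesis unfolding w_def .
qed


lemma exp_ge_e: "exp 1 * (z::real) \<le> exp z"
proof -
  have "z \<le> exp (z - 1)" using exp_ge_add_one_self[of "z - 1"] by simp
  then have "exp 1 * z \<le> exp 1 * exp (z - 1)" by (simp)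
  also have "\<dots> = exp z" by (simp add: exp_add[symmetric])
  finally show ?thesis .
qed

lemma abs_le_exps2:
  fixes x K :: real
  assumes "K > 0" shows "\<bar>x\<bar> \<le> K / exp 1 * (exp (x/K) + exp (-x/K))"
proof -
  have h: "exp 1 * (x/K) \<le> exp (x/K)" "exp 1 * (-x/K) \<le> exp (-x/K)" by (rule exp_ge_e)+
  have "\<bar>x/K\<bar> = x/K \<or> \<bar>x/K\<bar> = -x/K" by (auto simp: abs_if)
  then have "exp 1 * \<bar>x/K\<bar> = exp 1 * (x/K) \<or> exp 1 * \<bar>x/K\<bar> = exp 1 * (-x/K)" by auto
  then have "exp 1 * \<bar>x/K\<bar> \<le> exp (x/K) + exp (-x/K)"
    using h exp_gt_zero[of "x/K"] exp_gt_zero[of "-x/K"] by linarith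
  then have "exp 1 * \<bar>x\<bar> \<le> K * (exp (x/K) + exp (-x/K))"
    using assms by (simp add: field_simps abs_div)
  then show ?thesis using assms by (simp add: field_simps)
qed

lemma x_le_exp_eta:
  fixes x \<eta> :: real
  assumes "\<eta> > 0" shows "x \<le> exp (\<eta> * x) / (exp 1 * \<eta>)"
proof -
  have "exp 1 * (\<eta> * x) \<le> exp (\<eta> * x)" by (rule exp_ge_e)
  moreover have "exp 1 * \<eta> > 0" using assms by simp
  ultimately show ?thesis by (subst pos_le_divide_eq) (auto simp: mult_ac)
qed

lemma omega_le_exp:
  assumes "0 \<le> l" "l \<le> 1" shows "omega t \<le> exp (2*l*t)"
proof (cases "t \<ge> 0")
  case True
  then have "1 \<le> exp (2*l*t)" using assms by simp
  then show ?thesis using omega_le1[of t] by linarith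
next
  case False
  have p: "0 < (1 + exp (- 2 * t)) * exp (- 2 * t)"
    by (intro mult_pos_pos add_pos_pos) auto
  have "omega t \<le> 1 / exp (-2*t)" unfolding omega_def
    by (rule divide_left_mono) (use p in auto)
  also have "\<dots> = exp (2*t)" by (simp add: exp_minus field_simps)
  also have "\<dots> \<le> exp (2*l*t)"
  proof -
    have "(1-l)*t \<le> 0" using False assms by (intro mult_nonneg_nonpos) auto
    then have "2*t \<le> 2*l*t" by (simp add: algebra_simps)
    then show ?thesis by simp
  qed
  finally show ?thesis .
qed

lemma one_minus_omega: "1 - omega t = omega (-t)"
proof -
  have p1: "1 + exp (-2*t) > 0" "1 + exp (2*t) > 0" by (auto intro: add_pos_pos)
  have "1 - 1 / (1 + exp (-2*t)) = exp (-2*t) / (1 + exp (-2*t))" using p1 by (simp add: field_simps)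
  also have "\<dots> = 1 / (1 + exp (2*t))" using p1 by (simp add: exp_minus field_simps)
  finally show ?thesis unfolding omega_def by simp
qed

lemma one_minus_omega_le_exp:
  assumes "0 \<le> l" "l \<le> 1" shows "1 - omega t \<le> exp (- 2*l*t)"
  using omega_le_exp[OF assms, of "-t"] unfolding one_minus_omega by simp



lemma weighted_abs:
  fixes \<mu> u c :: "'a::euclidean_space"
  assumes \<sigma>: "\<sigma> > 0" and K: "K > 0" and [measurable]: "w \<in> borel_measurable borel"
    and w0: "\<And>y. 0 \<le> w y" and w1: "\<And>y. w y \<le> exp (c\<bullet>y)"
  shows "integrable lborel (\<lambda>y. w y * gauss_pdf \<sigma> \<mu> y * \<bar>y\<bullet>u\<bar>)"
    and "(\<integral>y. w y * gauss_pdf \<sigma> \<mu> y * \<bar>y\<bullet>u\<bar> \<partial>lborel) \<le> K / exp 1 *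
          (exp ((c + (1/K) *\<^sub>R u)\<bullet>\<mu> + \<sigma>\<^sup>2*(norm (c + (1/K) *\<^sub>R u))\<^sup>2/2)
         + exp ((c - (1/K) *\<^sub>R u)\<bullet>\<mu> + \<sigma>\<^sup>2*(norm (c - (1/K) *\<^sub>R u))\<^sup>2/2))"
proof -
  define R where "R y = K / exp 1 * (exp ((c + (1/K) *\<^sub>R u)\<bullet>y) * gauss_pdf \<sigma> \<mu> y + exp ((c - (1/K) *\<^sub>R u)\<bullet>y) * gauss_pdf \<sigma> \<mu> y)" for y
  have Rint: "integrable lborel R"
    unfolding R_def[abs_def]
    by (intro integrable_mult_right Bochner_Integration.integrable_add mgf_int(1)[OF \<sigma>])
  have Rval: "(\<integral>y. R y \<partial>lborel) = K / exp 1 *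
          (exp ((c + (1/K) *\<^sub>R u)\<bullet>\<mu> + \<sigma>\<^sup>2*(norm (c + (1/K) *\<^sub>R u))\<^sup>2/2)
         + exp ((c - (1/K) *\<^sub>R u)\<bullet>\<mu> + \<sigma>\<^sup>2*(norm (c - (1/K) *\<^sub>R u))\<^sup>2/2))"
    unfolding R_def
    by (simp add: Bochner_Integration.integral_add mgf_int[OF \<sigma>])
  have pt: "w y * gauss_pdf \<sigma> \<mu> y * \<bar>y\<bullet>u\<bar> \<le> R y" for y
  proof -
    have g: "0 \<le> gauss_pdf \<sigma> \<mu> y" by (rule gauss_nonneg)
    have "w y * gauss_pdf \<sigma> \<mu> y * \<bar>y\<bullet>u\<bar> \<le> exp (c\<bullet>y) * gauss_pdf \<sigma> \<mu> y * \<bar>y\<bullet>u\<bar>"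
      using w1[of y] g by (intro mult_right_mono) auto
    also have "\<dots> \<le> exp (c\<bullet>y) * gauss_pdf \<sigma> \<mu> y * (K / exp 1 * (exp ((y\<bullet>u)/K) + exp (-(y\<bullet>u)/K)))"
      using g by (intro mult_left_mono abs_le_exps2 K) auto
    also have "\<dots> = R y"
    proof -
      have e1: "(c + (1/K) *\<^sub>R u)\<bullet>y = c\<bullet>y + (y\<bullet>u)/K"
        by (simp only: inner_add_left inner_scaleR_left) (simp add: inner_commute)
      have x1: "exp (c\<bullet>y) * exp ((y\<bullet>u)/K) = exp ((c + (1/K) *\<^sub>R u)\<bullet>y)"
        by (simp only: e1 exp_add)
      have e2: "(c - (1/K) *\<^sub>R u)\<bullet>y = c\<bullet>y + (-(y\<bullet>u)/K)"
        by (simp only: inner_diff_left inner_scaleR_left) (simp add: inner_commute)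
      have x2: "exp (c\<bullet>y) * exp (-(y\<bullet>u)/K) = exp ((c - (1/K) *\<^sub>R u)\<bullet>y)"
        by (simp only: e2 exp_add)
      show ?thesis unfolding R_def x1[symmetric] x2[symmetric] by (simp only: ring_distribs mult_ac)
    qed
    finally show ?thesis .
  qed
  show int: "integrable lborel (\<lambda>y. w y * gauss_pdf \<sigma> \<mu> y * \<bar>y\<bullet>u\<bar>)"
  proof (rule Bochner_Integration.integrable_bound[OF Rint])
    show "AE y in lborel. norm (w y * gauss_pdf \<sigma> \<mu> y * \<bar>y\<bullet>u\<bar>) \<le> norm (R y)"
    proof (rule AE_I2)
      fix y
      have "0 \<le> w y * gauss_pdf \<sigma> \<mu> y * \<bar>y\<bullet>u\<bar>" using w0[of y] gauss_nonneg[of \<sigma> \<mu> y] by simp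
      then show "norm (w y * gauss_pdf \<sigma> \<mu> y * \<bar>y\<bullet>u\<bar>) \<le> norm (R y)" using pt[of y] by simp
    qed
  qed simp
  show "(\<integral>y. w y * gauss_pdf \<sigma> \<mu> y * \<bar>y\<bullet>u\<bar> \<partial>lborel) \<le> K / exp 1 *
          (exp ((c + (1/K) *\<^sub>R u)\<bullet>\<mu> + \<sigma>\<^sup>2*(norm (c + (1/K) *\<^sub>R u))\<^sup>2/2)
         + exp ((c - (1/K) *\<^sub>R u)\<bullet>\<mu> + \<sigma>\<^sup>2*(norm (c - (1/K) *\<^sub>R u))\<^sup>2/2))"
    unfolding Rval[symmetric] by (rule integral_mono[OF int Rint pt])
qed

lemma omega_upper:
  fixes \<mu> u \<theta> :: "'a::euclidean_space"
  assumes \<sigma>: "\<sigma> > 0" and \<eta>: "\<eta> > 0"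
  shows "(\<integral>y. omega ((\<theta>\<bullet>y)/\<sigma>\<^sup>2) * gauss_pdf \<sigma> \<mu> y * (y\<bullet>u) \<partial>lborel)
     \<le> exp ((\<eta> *\<^sub>R u)\<bullet>\<mu> + \<sigma>\<^sup>2*(norm (\<eta> *\<^sub>R u))\<^sup>2/2) / (exp 1 * \<eta>)"
proof -
  define w where "w y = omega ((\<theta>\<bullet>y)/\<sigma>\<^sup>2)" for y :: 'a
  have [measurable]: "w \<in> borel_measurable borel" unfolding w_def[abs_def] by measurable
  have wb: "\<bar>w y\<bar> \<le> 1" for y using omega_pos omega_le1 unfolding w_def by (simp add: abs_le_iff) (smt (verit))
  have pt: "w y * gauss_pdf \<sigma> \<mu> y * (y\<bullet>u) \<le> exp ((\<eta> *\<^sub>R u)\<bullet>y) * gauss_pdf \<sigma> \<mu> y / (exp 1 * \<eta>)" for y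
  proof -
    have g: "0 \<le> gauss_pdf \<sigma> \<mu> y" by (rule gauss_nonneg)
    have "w y * (y\<bullet>u) \<le> exp (\<eta> * (y\<bullet>u)) / (exp 1 * \<eta>)"
    proof (cases "y\<bullet>u \<ge> 0")
      case True
      then have "w y * (y\<bullet>u) \<le> 1 * (y\<bullet>u)" using omega_le1 unfolding w_def by (intro mult_right_mono) auto
      then show ?thesis using x_le_exp_eta[OF \<eta>, of "y\<bullet>u"] by simp
    next
      case False
      then have "w y * (y\<bullet>u) \<le> 0" using omega_pos unfolding w_def by (intro mult_nonneg_nonpos) (auto simp: less_imp_le)
      moreover have "0 \<le> exp (\<eta> * (y\<bullet>u)) / (exp 1 * \<eta>)" using \<eta> by simp
      ultimately show ?thesis by linarith
    qed
    then have "gauss_pdf \<sigma> \<mu> y * (w y * (y\<bullet>u)) \<le> gauss_pdf \<sigma> \<mu> y * (exp (\<eta> * (y\<bullet>u)) / (exp 1 * \<eta>))"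
      using g by (rule mult_left_mono)
    then show ?thesis by (simp add: algebra_simps inner_commute)
  qed
  have "(\<integral>y. w y * gauss_pdf \<sigma> \<mu> y * (y\<bullet>u) \<partial>lborel) \<le> (\<integral>y. exp ((\<eta> *\<^sub>R u)\<bullet>y) * gauss_pdf \<sigma> \<mu> y / (exp 1 * \<eta>) \<partial>lborel)"
    by (rule integral_mono[OF w_int[OF \<sigma> _ wb] _ pt]) (auto intro: integrable_divide[OF mgf_int(1)[OF \<sigma>]] simp del: inner_scaleR_left)
  also have "\<dots> = exp ((\<eta> *\<^sub>R u)\<bullet>\<mu> + \<sigma>\<^sup>2*(norm (\<eta> *\<^sub>R u))\<^sup>2/2) / (exp 1 * \<eta>)"
    by (simp only: integral_divide_zero mgf_int(2)[OF \<sigma>])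
  finally show ?thesis unfolding w_def .
qed



lemma exp_fifth: "exp (1/5::real) \<le> 4/3"
proof (rule ccontr)
  assume "\<not> ?thesis"
  then have "(4/3::real)^5 < exp (1/5) ^ 5" by (intro power_strict_mono) auto
  also have "exp (1/5::real) ^ 5 = exp 1" by (simp add: exp_of_nat_mult[symmetric])
  also have "\<dots> \<le> 3" by (rule exp_le)
  finally show False by (simp add: power_divide)
qed

lemma ln2_ge: "1/2 \<le> ln (2::real)"
proof -
  have "exp (1/2::real) ^ 2 = exp 1" by (simp add: exp_of_nat_mult[symmetric])
  also have "\<dots> \<le> 2^2" using exp_le by simp
  finally have "exp (1/2::real) \<le> 2" by (rule power2_le_imp_le) simp
  then have "ln (exp (1/2::real)) \<le> ln 2" by (subst ln_le_cancel_iff) auto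
  then show ?thesis by simp
qed

lemma exp_one_ge2: "2 \<le> exp (1::real)"
  using exp_ge_add_one_self[of 1] by simp

lemma final_ineq:
  fixes A V S2 a r L \<delta> :: real
  assumes S2: "S2 > 0" and a: "0 < a" "a < 1" and r: "1 \<le> r" and d: "0 < \<delta>" "\<delta> < 1"
    and L: "L = ln (2/\<delta>)" and A: "a*S2 \<le> A" and V: "V \<le> r\<^sup>2*S2" and CS: "A\<^sup>2 \<le> V*S2"
    and H: "5*L*r\<^sup>2 \<le> a\<^sup>2*S2"
  shows "\<exists>l. 0 \<le> l \<and> l \<le> 1 \<and> 0 \<le> l*A \<and>
     2/exp 1 * (exp (1 - 2*l*A + 2*l\<^sup>2*V - 2*l*A/S2 + 1/(2*S2)) + exp (-1 - 2*l*A + 2*l\<^sup>2*V + 2*l*A/S2 + 1/(2*S2))) \<le> \<delta>"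
proof -
  have "ln 2 \<le> L" unfolding L using d by (subst ln_le_cancel_iff) (auto simp: field_simps)
  then have L2: "1/2 \<le> L" using ln2_ge by linarith
  have r2: "1 \<le> r\<^sup>2" using r by (simp add: one_le_power)
  have a2: "a\<^sup>2 \<le> 1" using a by (simp add: power_le_one)
  have "5*L \<le> 5*L*r\<^sup>2" using r2 L2 by (simp add: mult_le_cancel_left1)
  also have "\<dots> \<le> a\<^sup>2*S2" by (rule H)
  also have "\<dots> \<le> S2" using a2 S2 by (simp add: mult_le_cancel_right1)
  finally have S5L: "5*L \<le> S2" .
  have aS2: "a\<^sup>2*S2 \<le> a*S2" using a S2 by (simp add: power2_eq_square)
  have Apos: "A > 0" using A a S2 by (smt (verit) mult_pos_pos)
  have Vpos: "V > 0"
  proof -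
    have "0 < A\<^sup>2" using Apos by simp
    then have "0 < V*S2" using CS by linarith
    then show ?thesis using S2 by (simp add: zero_less_mult_iff)
  qed
  define l where "l = (if A \<le> 2*V then A/(2*V) else 1)"
  have l0: "0 \<le> l" and l1: "l \<le> 1" using Apos Vpos unfolding l_def by auto
  have lA: "0 \<le> l*A" using l0 Apos by simp
  define Q where "Q = - 2*l*A + 2*l\<^sup>2*V"
  have Qb: "Q \<le> - 5*L/2" and lAb: "l*A/S2 \<le> 1/2"
  proof -
    have "Q \<le> - 5*L/2 \<and> l*A/S2 \<le> 1/2"
    proof (cases "A \<le> 2*V")
      case True
      then have ld: "l = A/(2*V)" unfolding l_def by simp
      have QA: "Q = - A\<^sup>2/(2*V)" unfolding Q_def ld using Vpos by (simp add: field_simps power2_eq_square)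
      have "a\<^sup>2*S2*S2 \<le> A\<^sup>2"
      proof -
        have "a*S2 \<ge> 0" using a S2 by simp
        then have "(a*S2)\<^sup>2 \<le> A\<^sup>2" using A by (intro power_mono) auto
        then show ?thesis by (simp add: power2_eq_square mult_ac)
      qed
      moreover have "5*L*(r\<^sup>2*S2) \<le> a\<^sup>2*S2*S2" using H S2 by (simp add: mult_right_mono mult.assoc[symmetric])
      ultimately have "5*L*(r\<^sup>2*S2) \<le> A\<^sup>2" by linarith
      moreover have "5*L*V \<le> 5*L*(r\<^sup>2*S2)" using V L2 by (intro mult_left_mono) auto
      ultimately have "5*L*V \<le> A\<^sup>2" by linarith
      then have "5*L/2 \<le> A\<^sup>2/(2*V)" using Vpos by (simp add: field_simps)
      then have 1: "Q \<le> - 5*L/2" unfolding QA by simp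
      have "l*A = A\<^sup>2/(2*V)" unfolding ld by (simp add: power2_eq_square)
      also have "\<dots> \<le> V*S2/(2*V)" using CS Vpos by (intro divide_right_mono) auto
      also have "\<dots> = S2/2" using Vpos by simp
      finally have "l*A/S2 \<le> 1/2" using S2 by (simp add: field_simps)
      with 1 show ?thesis by simp
    next
      case False
      then have ld: "l = 1" unfolding l_def by simp
      have "Q = -2*A + 2*V" unfolding Q_def ld by simp
      also have "\<dots> \<le> - A" using False by simp
      also have "\<dots> \<le> - (a*S2)" using A by simp
      also have "\<dots> \<le> - (5*L)" using S5L H aS2 r2 L2 \<open>5*L \<le> 5*L*r\<^sup>2\<close> by linarith
      also have "\<dots> \<le> - 5*L/2" using L2 by simp
      finally have 1: "Q \<le> - 5*L/2" .
      have "A*A \<le> V*S2" using CS by (simp add: power2_eq_square)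
      also have "\<dots> \<le> (A/2)*S2" using False S2 by (intro mult_right_mono) auto
      finally have "A \<le> S2/2" using Apos by (simp add: field_simps)
      then have "l*A/S2 \<le> 1/2" unfolding ld using S2 by (simp add: field_simps)
      with 1 show ?thesis by simp
    qed
    then show "Q \<le> - 5*L/2" "l*A/S2 \<le> 1/2" by auto
  qed
  have small: "1/(2*S2) \<le> 1/5" using S5L L2 S2 by (simp add: field_simps)
  have E1: "1 - 2*l*A + 2*l\<^sup>2*V - 2*l*A/S2 + 1/(2*S2) \<le> 1 + 1/5 + Q"
  proof -
    have "0 \<le> 2*l*A/S2" using lA S2 by (simp add: mult.assoc)
    then show ?thesis unfolding Q_def using small by linarith
  qed
  have E2: "-1 - 2*l*A + 2*l\<^sup>2*V + 2*l*A/S2 + 1/(2*S2) \<le> 1/5 + Q"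
    unfolding Q_def using small lAb by (simp add: field_simps)
  have "exp (1 - 2*l*A + 2*l\<^sup>2*V - 2*l*A/S2 + 1/(2*S2)) + exp (-1 - 2*l*A + 2*l\<^sup>2*V + 2*l*A/S2 + 1/(2*S2))
      \<le> exp (1 + 1/5 + Q) + exp (1/5 + Q)"
    using E1 E2 by (intro add_mono) auto
  also have "\<dots> = (exp 1 + 1) * exp (1/5) * exp Q"
    unfolding exp_add by (simp only: ring_distribs mult_ac mult_1_left)
  finally have S: "exp (1 - 2*l*A + 2*l\<^sup>2*V - 2*l*A/S2 + 1/(2*S2)) + exp (-1 - 2*l*A + 2*l\<^sup>2*V + 2*l*A/S2 + 1/(2*S2))
      \<le> (exp 1 + 1) * exp (1/5) * exp Q" .
  have eQ: "exp Q \<le> (\<delta>/2)\<^sup>2"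
  proof -
    have "exp Q \<le> exp (- 2 * L)" using Qb L2 by simp
    also have "exp (- 2 * L) = (exp (- L))\<^sup>2" by (simp add: exp_of_nat_mult[symmetric] power2_eq_square exp_add[symmetric])
    also have "exp (- L) = \<delta>/2" unfolding L using d by (simp add: exp_minus)
    finally show ?thesis .
  qed
  have e2: "2 \<le> exp (1::real)" by (rule exp_one_ge2)
  have "2/exp 1 * ((exp 1 + 1) * exp (1/5) * exp Q) = 2 * (1 + 1/exp 1) * exp (1/5) * exp Q"
    by (simp add: field_simps)
  also have "\<dots> \<le> 2 * (3/2) * (4/3) * (\<delta>/2)\<^sup>2"
  proof -
    have "1 + 1/exp 1 \<le> (3/2::real)" using e2 by (simp add: field_simps)
    then show ?thesis using exp_fifth eQ
      by (intro mult_mono mult_left_mono) auto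
  qed
  also have "\<dots> = \<delta>*\<delta>" by (simp add: power2_eq_square)
  also have "\<dots> \<le> \<delta>" using d by (simp add: mult_le_cancel_left1)
  finally have fin: "2/exp 1 * ((exp 1 + 1) * exp (1/5) * exp Q) \<le> \<delta>" .
  have "2/exp 1 * (exp (1 - 2*l*A + 2*l\<^sup>2*V - 2*l*A/S2 + 1/(2*S2)) + exp (-1 - 2*l*A + 2*l\<^sup>2*V + 2*l*A/S2 + 1/(2*S2)))
     \<le> 2/exp 1 * ((exp 1 + 1) * exp (1/5) * exp Q)"
    using S by (intro mult_left_mono) auto
  with fin l0 l1 lA show ?thesis by (intro exI[of _ l]) auto
qed



lemma norm_comb2: "(norm (t *\<^sub>R x + k *\<^sub>R z))\<^sup>2 = t\<^sup>2*(norm x)\<^sup>2 + 2*t*k*(x\<bullet>z) + k\<^sup>2*(norm z)\<^sup>2"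
  unfolding power2_norm_eq_inner
  by (simp add: inner_add_left inner_add_right inner_commute[of z x] power2_eq_square algebra_simps)

lemma inner_comb2: "(t *\<^sub>R x + k *\<^sub>R z)\<bullet>z = t*(x\<bullet>z) + k*(norm z)\<^sup>2"
  by (simp add: inner_add_left power2_norm_eq_inner)

lemma pop_lower:
  fixes \<theta>s \<theta> :: "'a::euclidean_space"
  assumes \<sigma>: "\<sigma> > 0" and ts: "\<theta>s \<noteq> 0" and a: "0 < a" "a < 1" and r: "1 \<le> r"
    and d: "0 < \<delta>" "\<delta> < 1" and L: "L = ln (2/\<delta>)"
    and H1: "a*(norm \<theta>s)\<^sup>2 \<le> \<theta>\<bullet>\<theta>s" and B1: "norm \<theta> \<le> r * norm \<theta>s"
    and H: "5*L*r\<^sup>2 \<le> a\<^sup>2*(norm \<theta>s/\<sigma>)\<^sup>2"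
  shows "(1-\<delta>)*(norm \<theta>s)\<^sup>2 \<le> M_pop \<sigma> \<theta>s \<theta> \<bullet> \<theta>s"
proof -
  define N where "N = (norm \<theta>s)\<^sup>2"
  have N: "N > 0" using ts unfolding N_def by simp
  define S2 where "S2 = N/\<sigma>\<^sup>2"
  define A where "A = (\<theta>\<bullet>\<theta>s)/\<sigma>\<^sup>2"
  define V where "V = (norm \<theta>)\<^sup>2/\<sigma>\<^sup>2"
  have s2: "\<sigma>\<^sup>2 > 0" using \<sigma> by simp
  have S2: "S2 > 0" using N s2 unfolding S2_def by simp
  have hA: "a*S2 \<le> A" unfolding A_def S2_def N_def using H1 s2 by (simp add: field_simps)
  have hV: "V \<le> r\<^sup>2*S2"
  proof -
    have "(norm \<theta>)\<^sup>2 \<le> (r * norm \<theta>s)\<^sup>2" using B1 by (intro power_mono) auto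
    then show ?thesis unfolding V_def S2_def N_def using s2 by (simp add: field_simps power_mult_distrib)
  qed
  have hCS: "A\<^sup>2 \<le> V*S2"
  proof -
    have "\<bar>\<theta>\<bullet>\<theta>s\<bar> \<le> norm \<theta> * norm \<theta>s" by (rule Cauchy_Schwarz_ineq2)
    then have "(\<theta>\<bullet>\<theta>s)\<^sup>2 \<le> (norm \<theta> * norm \<theta>s)\<^sup>2"
      by (metis abs_ge_zero power2_abs power_mono)
    moreover have "A\<^sup>2 = (\<theta>\<bullet>\<theta>s)\<^sup>2/(\<sigma>\<^sup>2)\<^sup>2" unfolding A_def by (simp add: power_divide)
    moreover have "V*S2 = (norm \<theta> * norm \<theta>s)\<^sup>2/(\<sigma>\<^sup>2)\<^sup>2" unfolding V_def S2_def N_def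
      by (simp add: power_mult_distrib power2_eq_square)
    ultimately show ?thesis by (simp add: divide_right_mono)
  qed
  have hH: "5*L*r\<^sup>2 \<le> a\<^sup>2*S2" using H unfolding S2_def N_def by (simp add: power_divide)
  obtain l where l0: "0 \<le> l" and l1: "l \<le> 1" and lA: "0 \<le> l*A" and
    fin: "2/exp 1 * (exp (1 - 2*l*A + 2*l\<^sup>2*V - 2*l*A/S2 + 1/(2*S2)) + exp (-1 - 2*l*A + 2*l\<^sup>2*V + 2*l*A/S2 + 1/(2*S2))) \<le> \<delta>"
    using final_ineq[OF S2 a r d L hA hV hCS hH] by blast
  define X1 where "X1 = exp (1 - 2*l*A + 2*l\<^sup>2*V - 2*l*A/S2 + 1/(2*S2))"
  define X2 where "X2 = exp (-1 - 2*l*A + 2*l\<^sup>2*V + 2*l*A/S2 + 1/(2*S2))"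
  define t where "t = 2*l/\<sigma>\<^sup>2"
  define w where "w y = omega ((\<theta>\<bullet>y)/\<sigma>\<^sup>2)" for y :: 'a
  have [measurable]: "w \<in> borel_measurable borel" unfolding w_def[abs_def] by measurable
  have w0: "0 \<le> w y" and w1: "w y \<le> 1" for y unfolding w_def using omega_pos omega_le1 by (auto intro: less_imp_le)
  have wb: "\<bar>w y\<bar> \<le> 1" for y using w0 w1 by simp
  have w1b: "\<bar>1 - w y\<bar> \<le> 1" for y using w0 w1 by simp
  have wexp: "w y \<le> exp ((t *\<^sub>R \<theta>)\<bullet>y)" for y
  proof -
    have "w y \<le> exp (2*l*((\<theta>\<bullet>y)/\<sigma>\<^sup>2))" unfolding w_def by (rule omega_le_exp[OF l0 l1])
    also have "2*l*((\<theta>\<bullet>y)/\<sigma>\<^sup>2) = (t *\<^sub>R \<theta>)\<bullet>y" unfolding t_def by simp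
    finally show ?thesis .
  qed
  have w'exp: "1 - w y \<le> exp (((-t) *\<^sub>R \<theta>)\<bullet>y)" for y
  proof -
    have "1 - w y \<le> exp (-2*l*((\<theta>\<bullet>y)/\<sigma>\<^sup>2))" unfolding w_def by (rule one_minus_omega_le_exp[OF l0 l1])
    also have "-2*l*((\<theta>\<bullet>y)/\<sigma>\<^sup>2) = ((-t) *\<^sub>R \<theta>)\<bullet>y" unfolding t_def by simp
    finally show ?thesis .
  qed
  have w'0: "0 \<le> 1 - w y" for y using w1 by simp
  have [measurable]: "(\<lambda>y. 1 - w y) \<in> borel_measurable borel" by measurable
  note gp = gauss_nonneg[of \<sigma>]
  have pA: "\<theta>\<bullet>\<theta>s = A*\<sigma>\<^sup>2" unfolding A_def using s2 by simp
  have qV: "(norm \<theta>)\<^sup>2 = V*\<sigma>\<^sup>2" unfolding V_def using s2 by simp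
  have NS: "N = S2*\<sigma>\<^sup>2" unfolding S2_def using s2 by simp
  have ex1: "(t' *\<^sub>R \<theta> + k *\<^sub>R \<theta>s)\<bullet>\<theta>s + \<sigma>\<^sup>2*(norm (t' *\<^sub>R \<theta> + k *\<^sub>R \<theta>s))\<^sup>2/2
     = (t'*(A*\<sigma>\<^sup>2) + k*(S2*\<sigma>\<^sup>2)) + \<sigma>\<^sup>2*(t'\<^sup>2*(V*\<sigma>\<^sup>2) + 2*t'*k*(A*\<sigma>\<^sup>2) + k\<^sup>2*(S2*\<sigma>\<^sup>2))/2" for t' k
    unfolding norm_comb2 inner_comb2 pA qV NS[unfolded N_def] ..
  have ex2: "(t' *\<^sub>R \<theta> + k *\<^sub>R \<theta>s)\<bullet>(-\<theta>s) + \<sigma>\<^sup>2*(norm (t' *\<^sub>R \<theta> + k *\<^sub>R \<theta>s))\<^sup>2/2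
     = - (t'*(A*\<sigma>\<^sup>2) + k*(S2*\<sigma>\<^sup>2)) + \<sigma>\<^sup>2*(t'\<^sup>2*(V*\<sigma>\<^sup>2) + 2*t'*k*(A*\<sigma>\<^sup>2) + k\<^sup>2*(S2*\<sigma>\<^sup>2))/2" for t' k
    unfolding norm_comb2 inner_minus_right inner_comb2 pA qV NS[unfolded N_def] ..
  have tt: "t = 2*l/\<sigma>\<^sup>2" by (rule t_def)
  have e1: "((-t) *\<^sub>R \<theta> + (1/N) *\<^sub>R \<theta>s)\<bullet>\<theta>s + \<sigma>\<^sup>2*(norm ((-t) *\<^sub>R \<theta> + (1/N) *\<^sub>R \<theta>s))\<^sup>2/2
      = 1 - 2*l*A + 2*l\<^sup>2*V - 2*l*A/S2 + 1/(2*S2)"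
    unfolding ex1 NS tt using s2 S2 \<sigma> by (simp add: field_simps power2_eq_square)
  have e2: "((-t) *\<^sub>R \<theta> + (-1/N) *\<^sub>R \<theta>s)\<bullet>\<theta>s + \<sigma>\<^sup>2*(norm ((-t) *\<^sub>R \<theta> + (-1/N) *\<^sub>R \<theta>s))\<^sup>2/2
      = -1 - 2*l*A + 2*l\<^sup>2*V + 2*l*A/S2 + 1/(2*S2)"
    unfolding ex1 NS tt using s2 S2 \<sigma> by (simp add: field_simps power2_eq_square)
  have e3: "(t *\<^sub>R \<theta> + (1/N) *\<^sub>R \<theta>s)\<bullet>(-\<theta>s) + \<sigma>\<^sup>2*(norm (t *\<^sub>R \<theta> + (1/N) *\<^sub>R \<theta>s))\<^sup>2/2
      = -1 - 2*l*A + 2*l\<^sup>2*V + 2*l*A/S2 + 1/(2*S2)"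
    unfolding ex2 NS tt using s2 S2 \<sigma> by (simp add: field_simps power2_eq_square)
  have e4: "(t *\<^sub>R \<theta> + (-1/N) *\<^sub>R \<theta>s)\<bullet>(-\<theta>s) + \<sigma>\<^sup>2*(norm (t *\<^sub>R \<theta> + (-1/N) *\<^sub>R \<theta>s))\<^sup>2/2
      = 1 - 2*l*A + 2*l\<^sup>2*V - 2*l*A/S2 + 1/(2*S2)"
    unfolding ex2 NS tt using s2 S2 \<sigma> by (simp add: field_simps power2_eq_square)
  have cm1: "(-t) *\<^sub>R \<theta> - (1/N) *\<^sub>R \<theta>s = (-t) *\<^sub>R \<theta> + (-1/N) *\<^sub>R \<theta>s" by simp
  have cm2: "t *\<^sub>R \<theta> - (1/N) *\<^sub>R \<theta>s = t *\<^sub>R \<theta> + (-1/N) *\<^sub>R \<theta>s" by simp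
  have WA1: "(\<integral>y. (1 - w y) * gauss_pdf \<sigma> \<theta>s y * \<bar>y\<bullet>\<theta>s\<bar> \<partial>lborel) \<le> N / exp 1 * (X1 + X2)"
    using weighted_abs(2)[OF \<sigma> N, of "\<lambda>y. 1 - w y" "(-t) *\<^sub>R \<theta>" \<theta>s \<theta>s, OF _ w'0 w'exp]
    unfolding cm1 e1 e2 X1_def X2_def by simp
  have WA1i: "integrable lborel (\<lambda>y. (1 - w y) * gauss_pdf \<sigma> \<theta>s y * \<bar>y\<bullet>\<theta>s\<bar>)"
    using weighted_abs(1)[OF \<sigma> N, of "\<lambda>y. 1 - w y" "(-t) *\<^sub>R \<theta>" \<theta>s \<theta>s, OF _ w'0 w'exp] by simp
  have WA2: "(\<integral>y. w y * gauss_pdf \<sigma> (-\<theta>s) y * \<bar>y\<bullet>\<theta>s\<bar> \<partial>lborel) \<le> N / exp 1 * (X2 + X1)"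
    using weighted_abs(2)[OF \<sigma> N, of w "t *\<^sub>R \<theta>" "-\<theta>s" \<theta>s, OF _ w0 wexp]
    unfolding cm2 e3 e4 X1_def X2_def by simp
  have WA2i: "integrable lborel (\<lambda>y. w y * gauss_pdf \<sigma> (-\<theta>s) y * \<bar>y\<bullet>\<theta>s\<bar>)"
    using weighted_abs(1)[OF \<sigma> N, of w "t *\<^sub>R \<theta>" "-\<theta>s" \<theta>s, OF _ w0 wexp] by simp
  have int1: "integrable lborel (\<lambda>y. (1 - w y) * gauss_pdf \<sigma> \<theta>s y * (y\<bullet>\<theta>s))"
    by (rule w_int[OF \<sigma> _ w1b]) simp
  have int2: "integrable lborel (\<lambda>y. w y * gauss_pdf \<sigma> (-\<theta>s) y * (y\<bullet>\<theta>s))"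
    by (rule w_int[OF \<sigma> _ wb]) simp
  have Ip: "(\<integral>y. w y * gauss_pdf \<sigma> \<theta>s y * (y\<bullet>\<theta>s) \<partial>lborel) \<ge> N - N / exp 1 * (X1 + X2)"
  proof -
    have "(\<lambda>y. w y * gauss_pdf \<sigma> \<theta>s y * (y\<bullet>\<theta>s)) = (\<lambda>y. gauss_pdf \<sigma> \<theta>s y * (y\<bullet>\<theta>s) - (1 - w y) * gauss_pdf \<sigma> \<theta>s y * (y\<bullet>\<theta>s))"
      by (auto simp: algebra_simps)
    then have "(\<integral>y. w y * gauss_pdf \<sigma> \<theta>s y * (y\<bullet>\<theta>s) \<partial>lborel) = N - (\<integral>y. (1 - w y) * gauss_pdf \<sigma> \<theta>s y * (y\<bullet>\<theta>s) \<partial>lborel)"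
      using lin_int[OF \<sigma>, of \<theta>s \<theta>s] int1 mean_gauss[OF \<sigma>, of \<theta>s \<theta>s]
      by (simp add: Bochner_Integration.integral_diff N_def power2_norm_eq_inner)
    moreover have "(\<integral>y. (1 - w y) * gauss_pdf \<sigma> \<theta>s y * (y\<bullet>\<theta>s) \<partial>lborel) \<le> (\<integral>y. (1 - w y) * gauss_pdf \<sigma> \<theta>s y * \<bar>y\<bullet>\<theta>s\<bar> \<partial>lborel)"
    proof (rule integral_mono[OF int1 WA1i])
      fix y
      have "0 \<le> (1 - w y) * gauss_pdf \<sigma> \<theta>s y" using w'0[of y] gp[of \<theta>s y] by (rule mult_nonneg_nonneg)
      then show "(1 - w y) * gauss_pdf \<sigma> \<theta>s y * (y\<bullet>\<theta>s) \<le> (1 - w y) * gauss_pdf \<sigma> \<theta>s y * \<bar>y\<bullet>\<theta>s\<bar>"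
        by (rule mult_left_mono[OF abs_ge_self])
    qed
    ultimately show ?thesis using WA1 by linarith
  qed
  have Im: "(\<integral>y. w y * gauss_pdf \<sigma> (-\<theta>s) y * (y\<bullet>\<theta>s) \<partial>lborel) \<ge> - (N / exp 1 * (X2 + X1))"
  proof -
    have "(\<integral>y. - (w y * gauss_pdf \<sigma> (-\<theta>s) y * \<bar>y\<bullet>\<theta>s\<bar>) \<partial>lborel) \<le> (\<integral>y. w y * gauss_pdf \<sigma> (-\<theta>s) y * (y\<bullet>\<theta>s) \<partial>lborel)"
    proof (rule integral_mono)
      show "integrable lborel (\<lambda>y. - (w y * gauss_pdf \<sigma> (-\<theta>s) y * \<bar>y\<bullet>\<theta>s\<bar>))" using WA2i by simp
      show "integrable lborel (\<lambda>y. w y * gauss_pdf \<sigma> (-\<theta>s) y * (y\<bullet>\<theta>s))" by (rule int2)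
      fix y
      have "0 \<le> w y * gauss_pdf \<sigma> (-\<theta>s) y" using w0[of y] gp[of "-\<theta>s" y] by (rule mult_nonneg_nonneg)
      then have "(w y * gauss_pdf \<sigma> (-\<theta>s) y) * (-\<bar>y\<bullet>\<theta>s\<bar>) \<le> (w y * gauss_pdf \<sigma> (-\<theta>s) y) * (y\<bullet>\<theta>s)"
        by (rule mult_left_mono[rotated]) simp
      then show "- (w y * gauss_pdf \<sigma> (-\<theta>s) y * \<bar>y\<bullet>\<theta>s\<bar>) \<le> w y * gauss_pdf \<sigma> (-\<theta>s) y * (y\<bullet>\<theta>s)" by simp
    qed
    then show ?thesis using WA2 by simp
  qed
  have "M_pop \<sigma> \<theta>s \<theta> \<bullet> \<theta>s = (\<integral>y. w y * gauss_pdf \<sigma> \<theta>s y * (y\<bullet>\<theta>s) \<partial>lborel) + (\<integral>y. w y * gauss_pdf \<sigma> (-\<theta>s) y * (y\<bullet>\<theta>s) \<partial>lborel)"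
    unfolding w_def by (rule Mpop_inner[OF \<sigma>])
  also have "\<dots> \<ge> N - N * (2/exp 1 * (X1 + X2))" using Ip Im by (simp add: field_simps)
  finally have "N - N * (2/exp 1 * (X1 + X2)) \<le> M_pop \<sigma> \<theta>s \<theta> \<bullet> \<theta>s" .
  moreover have "N * (2/exp 1 * (X1 + X2)) \<le> N * \<delta>" using fin N unfolding X1_def X2_def by (intro mult_left_mono) auto
  ultimately show ?thesis unfolding N_def by (simp add: algebra_simps)
qed


lemma exp_half: "exp (1/2::real) \<le> 2"
proof -
  have "exp (1/2::real) ^ 2 = exp 1" by (simp add: exp_of_nat_mult[symmetric])
  also have "\<dots> \<le> 2^2" using exp_le by simp
  finally show "exp (1/2::real) \<le> 2" by (rule power2_le_imp_le) simp
qed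

lemma pop_norm:
  fixes \<theta>s \<theta> :: "'a::euclidean_space"
  assumes \<sigma>: "\<sigma> > 0" and ts: "\<theta>s \<noteq> 0" and s1: "\<sigma> \<le> norm \<theta>s"
  shows "norm (M_pop \<sigma> \<theta>s \<theta>) \<le> 4 * norm \<theta>s"
proof (cases "M_pop \<sigma> \<theta>s \<theta> = 0")
  case True then show ?thesis by simp
next
  case False
  define M where "M = M_pop \<sigma> \<theta>s \<theta>"
  have Mn: "norm M > 0" using False unfolding M_def by simp
  have tn: "norm \<theta>s > 0" using ts by simp
  define \<eta> where "\<eta> = 1 / (norm M * norm \<theta>s)"
  have \<eta>: "\<eta> > 0" unfolding \<eta>_def using Mn tn by simp
  have bnd: "exp ((\<eta> *\<^sub>R M)\<bullet>\<mu> + \<sigma>\<^sup>2*(norm (\<eta> *\<^sub>R M))\<^sup>2/2) / (exp 1 * \<eta>) \<le> 2 * norm M * norm \<theta>s"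
    if mu: "norm \<mu> = norm \<theta>s" for \<mu> :: 'a
  proof -
    have "(\<eta> *\<^sub>R M)\<bullet>\<mu> \<le> norm (\<eta> *\<^sub>R M) * norm \<mu>" by (rule norm_cauchy_schwarz)
    also have "\<dots> = 1" unfolding mu \<eta>_def using Mn tn by simp
    finally have 1: "(\<eta> *\<^sub>R M)\<bullet>\<mu> \<le> 1" .
    have "\<sigma>\<^sup>2*(norm (\<eta> *\<^sub>R M))\<^sup>2/2 = \<sigma>\<^sup>2/(2*(norm \<theta>s)\<^sup>2)"
      unfolding \<eta>_def using Mn tn by (simp add: power2_eq_square field_simps)
    also have "\<dots> \<le> 1/2"
    proof -
      have "\<sigma>\<^sup>2 \<le> (norm \<theta>s)\<^sup>2" using s1 \<sigma> by (intro power_mono) auto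
      then show ?thesis using tn by (simp add: field_simps)
    qed
    finally have 2: "\<sigma>\<^sup>2*(norm (\<eta> *\<^sub>R M))\<^sup>2/2 \<le> 1/2" .
    have "exp ((\<eta> *\<^sub>R M)\<bullet>\<mu> + \<sigma>\<^sup>2*(norm (\<eta> *\<^sub>R M))\<^sup>2/2) \<le> exp (1 + 1/2)"
      using 1 2 by simp
    also have "\<dots> = exp 1 * exp (1/2)" by (simp add: exp_add[symmetric])
    also have "\<dots> \<le> exp 1 * 2" using exp_half by simp
    finally have "exp ((\<eta> *\<^sub>R M)\<bullet>\<mu> + \<sigma>\<^sup>2*(norm (\<eta> *\<^sub>R M))\<^sup>2/2) / (exp 1 * \<eta>) \<le> exp 1 * 2 / (exp 1 * \<eta>)"
      using \<eta> by (intro divide_right_mono) auto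
    also have "\<dots> = 2 * norm M * norm \<theta>s" unfolding \<eta>_def using Mn tn by simp
    finally show ?thesis .
  qed
  have "(norm M)\<^sup>2 = M \<bullet> M" by (simp add: power2_norm_eq_inner)
  also have "\<dots> = (\<integral>y. omega ((\<theta>\<bullet>y)/\<sigma>\<^sup>2) * gauss_pdf \<sigma> \<theta>s y * (y\<bullet>M) \<partial>lborel)
          + (\<integral>y. omega ((\<theta>\<bullet>y)/\<sigma>\<^sup>2) * gauss_pdf \<sigma> (-\<theta>s) y * (y\<bullet>M) \<partial>lborel)"
    unfolding M_def by (rule Mpop_inner[OF \<sigma>])
  also have "\<dots> \<le> 2 * norm M * norm \<theta>s + 2 * norm M * norm \<theta>s"
    using omega_upper[OF \<sigma> \<eta>, of \<theta> \<theta>s M] omega_upper[OF \<sigma> \<eta>, of \<theta> "-\<theta>s" M] bnd[of \<theta>s] bnd[of "-\<theta>s"]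
    by (intro add_mono) auto
  finally have "norm M * norm M \<le> norm M * (4 * norm \<theta>s)" by (simp add: power2_eq_square algebra_simps)
  then show ?thesis unfolding M_def[symmetric] using Mn by simp
qed



lemma samp_bound:
  fixes y :: "nat \<Rightarrow> 'a::euclidean_space"
  shows "norm (M_samp \<sigma> y n \<theta>) \<le> (2 / real n) * (\<Sum>i<n. norm (y i)) + (1 / real n) * (\<Sum>i<n. norm (y i))"
proof -
  have "norm ((2 / real n) *\<^sub>R (\<Sum>i<n. omega ((y i \<bullet> \<theta>) / \<sigma>\<^sup>2) *\<^sub>R y i)) \<le> (2 / real n) * (\<Sum>i<n. norm (y i))"
  proof -
    have "norm (\<Sum>i<n. omega ((y i \<bullet> \<theta>) / \<sigma>\<^sup>2) *\<^sub>R y i) \<le> (\<Sum>i<n. norm (omega ((y i \<bullet> \<theta>) / \<sigma>\<^sup>2) *\<^sub>R y i))"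
      by (rule norm_sum)
    also have "\<dots> \<le> (\<Sum>i<n. norm (y i))"
    proof (rule sum_mono)
      fix i
      have "\<bar>omega ((y i \<bullet> \<theta>) / \<sigma>\<^sup>2)\<bar> * norm (y i) \<le> 1 * norm (y i)"
        using omega_pos omega_le1 by (intro mult_right_mono) (auto simp: abs_le_iff less_imp_le)
      then show "norm (omega ((y i \<bullet> \<theta>) / \<sigma>\<^sup>2) *\<^sub>R y i) \<le> norm (y i)" by simp
    qed
    finally have "(2 / real n) * norm (\<Sum>i<n. omega ((y i \<bullet> \<theta>) / \<sigma>\<^sup>2) *\<^sub>R y i) \<le> (2 / real n) * (\<Sum>i<n. norm (y i))"
      by (rule mult_left_mono) simp
    then show ?thesis by simp
  qed
  moreover have "norm ((1 / real n) *\<^sub>R (\<Sum>i<n. y i)) \<le> (1 / real n) * (\<Sum>i<n. norm (y i))"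
    by (simp add: divide_right_mono norm_sum)
  ultimately show ?thesis unfolding M_samp_def by (smt (verit) norm_triangle_ineq4)
qed

theorem lemma4:
  fixes \<theta>s :: "'a::euclidean_space" and \<sigma> a \<kappa>1 \<kappa>2 r :: real
    and y :: "nat \<Rightarrow> 'a" and n :: nat
  assumes "\<sigma> > 0" and "\<theta>s \<noteq> 0" and "n > 0"
    and "0 < a" "a < 1" "a < \<kappa>1" "\<kappa>1 < 1" "0 < \<kappa>2" "\<kappa>2 < 1" "r \<ge> 1"
    and "r \<le> a * (norm \<theta>s / \<sigma>) / sqrt (5 * ln (2 / (1 - a / \<kappa>1)))"
    and "4 / \<kappa>2 \<le> r"
    and "r \<le> a * (norm \<theta>s / \<sigma>) / sqrt (5 * ln (8 / \<kappa>2))"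
    and "S_dev \<sigma> \<theta>s y n a r \<le> norm \<theta>s * min (a * (1 / \<kappa>1 - 1)) (r * (1 - \<kappa>2))"
  shows "M_samp \<sigma> y n ` D_set \<theta>s a r \<subseteq> D_set \<theta>s a r"
proof -
  note \<sigma> = assms(1) and ts = assms(2) and a = assms(4,5) and k1 = assms(6,7) and k2 = assms(8,9)
    and r = assms(10) and hr1 = assms(11) and hr4 = assms(12) and Sb = assms(14)
  define \<delta> where "\<delta> = 1 - a/\<kappa>1"
  have k1pos: "\<kappa>1 > 0" using a k1 by simp
  have d: "0 < \<delta>" "\<delta> < 1" unfolding \<delta>_def using a k1 k1pos by (auto simp: field_simps)
  define L where "L = ln (2/\<delta>)"
  have "ln 2 \<le> L" unfolding L_def using d by (subst ln_le_cancel_iff) (auto simp: field_simps)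
  then have L2: "1/2 \<le> L" using ln2_ge by linarith
  have sq: "sqrt (5*L) > 0" using L2 by simp
  have "r \<le> a * (norm \<theta>s / \<sigma>) / sqrt (5*L)" using hr1 unfolding L_def \<delta>_def .
  then have "r * sqrt (5*L) \<le> a * (norm \<theta>s / \<sigma>)" using pos_le_divide_eq[OF sq] by blast
  moreover have "0 \<le> r * sqrt (5*L)" using r sq by simp
  ultimately have "(r * sqrt (5*L))\<^sup>2 \<le> (a * (norm \<theta>s / \<sigma>))\<^sup>2" by (rule power_mono)
  then have H: "5*L*r\<^sup>2 \<le> a\<^sup>2*(norm \<theta>s/\<sigma>)\<^sup>2" using L2 by (simp add: power_mult_distrib mult_ac power_divide)
  have s1: "\<sigma> \<le> norm \<theta>s"
  proof -
    have r2: "1 \<le> r\<^sup>2" using r by (simp add: one_le_power)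
    have "1 \<le> 5*L" using L2 by simp
    also have "\<dots> \<le> 5*L*r\<^sup>2" using r2 L2 by (simp add: mult_le_cancel_left1)
    finally have "1 \<le> 5*L*r\<^sup>2" .
    also have "\<dots> \<le> a\<^sup>2*(norm \<theta>s/\<sigma>)\<^sup>2" by (rule H)
    also have "\<dots> \<le> (norm \<theta>s/\<sigma>)\<^sup>2" using a by (intro mult_left_le_one_le) (auto simp: power_le_one)
    finally have "1\<^sup>2 \<le> (norm \<theta>s/\<sigma>)\<^sup>2" by simp
    then have "1 \<le> norm \<theta>s/\<sigma>" by (rule power2_le_imp_le) (use \<sigma> in simp)
    then show ?thesis using \<sigma> by (simp add: field_simps)
  qed
  define C where "C = (2 / real n) * (\<Sum>i<n. norm (y i)) + (1 / real n) * (\<Sum>i<n. norm (y i))"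
  have bdd: "bdd_above ((\<lambda>\<theta>. norm (M_samp \<sigma> y n \<theta> - M_pop \<sigma> \<theta>s \<theta>)) ` D_set \<theta>s a r)"
  proof (rule bdd_aboveI2)
    fix \<theta>
    have "norm (M_samp \<sigma> y n \<theta> - M_pop \<sigma> \<theta>s \<theta>) \<le> norm (M_samp \<sigma> y n \<theta>) + norm (M_pop \<sigma> \<theta>s \<theta>)"
      by (rule norm_triangle_ineq4)
    also have "\<dots> \<le> C + 4 * norm \<theta>s" unfolding C_def
      by (intro add_mono samp_bound pop_norm[OF \<sigma> ts s1])
    finally show "norm (M_samp \<sigma> y n \<theta> - M_pop \<sigma> \<theta>s \<theta>) \<le> C + 4 * norm \<theta>s" .
  qed
  show ?thesis
  proof
    fix z assume "z \<in> M_samp \<sigma> y n ` D_set \<theta>s a r"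
    then obtain \<theta> where th: "\<theta> \<in> D_set \<theta>s a r" and z: "z = M_samp \<sigma> y n \<theta>" by blast
    have H1: "a*(norm \<theta>s)\<^sup>2 \<le> \<theta>\<bullet>\<theta>s" and B1: "norm \<theta> \<le> r * norm \<theta>s"
      using th unfolding D_set_def H_set_def B_set_def by auto
    define dev where "dev = norm (M_samp \<sigma> y n \<theta> - M_pop \<sigma> \<theta>s \<theta>)"
    have "dev \<le> S_dev \<sigma> \<theta>s y n a r" unfolding dev_def S_dev_def by (rule cSUP_upper[OF th bdd])
    then have devb: "dev \<le> norm \<theta>s * min (a * (1 / \<kappa>1 - 1)) (r * (1 - \<kappa>2))" using Sb by linarith
    have tn: "norm \<theta>s > 0" using ts by simp
    have dev1: "dev \<le> norm \<theta>s * (a * (1 / \<kappa>1 - 1))" using devb tn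
      by (smt (verit) min.cobounded1 mult_left_mono)
    have dev2: "dev \<le> norm \<theta>s * (r * (1 - \<kappa>2))" using devb tn
      by (smt (verit) min.cobounded2 mult_left_mono)
    have PL: "(1-\<delta>)*(norm \<theta>s)\<^sup>2 \<le> M_pop \<sigma> \<theta>s \<theta> \<bullet> \<theta>s"
      by (rule pop_lower[OF \<sigma> ts a r d L_def H1 B1 H])
    have "z\<bullet>\<theta>s = M_pop \<sigma> \<theta>s \<theta> \<bullet> \<theta>s + (M_samp \<sigma> y n \<theta> - M_pop \<sigma> \<theta>s \<theta>)\<bullet>\<theta>s"
      unfolding z by (simp add: inner_diff_left)
    moreover have "- (dev * norm \<theta>s) \<le> (M_samp \<sigma> y n \<theta> - M_pop \<sigma> \<theta>s \<theta>)\<bullet>\<theta>s"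
      unfolding dev_def using Cauchy_Schwarz_ineq2[of "M_samp \<sigma> y n \<theta> - M_pop \<sigma> \<theta>s \<theta>" \<theta>s] by linarith
    moreover have "dev * norm \<theta>s \<le> norm \<theta>s * (a * (1 / \<kappa>1 - 1)) * norm \<theta>s"
      using dev1 tn by (intro mult_right_mono) auto
    moreover have "(1-\<delta>)*(norm \<theta>s)\<^sup>2 - norm \<theta>s * (a * (1 / \<kappa>1 - 1)) * norm \<theta>s = a*(norm \<theta>s)\<^sup>2"
      unfolding \<delta>_def using k1pos by (simp add: field_simps power2_eq_square)
    ultimately have zH: "a*(norm \<theta>s)\<^sup>2 \<le> z\<bullet>\<theta>s" using PL by linarith
    have "norm z \<le> norm (M_pop \<sigma> \<theta>s \<theta>) + dev"
      unfolding z dev_def by (metis add.commute norm_triangle_sub)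
    also have "\<dots> \<le> 4 * norm \<theta>s + norm \<theta>s * (r * (1 - \<kappa>2))"
      using pop_norm[OF \<sigma> ts s1, of \<theta>] dev2 by linarith
    also have "\<dots> \<le> r * norm \<theta>s"
    proof -
      have "4 \<le> r * \<kappa>2" using hr4 k2 by (simp add: field_simps)
      then have "4 * norm \<theta>s \<le> r * \<kappa>2 * norm \<theta>s" using tn by (intro mult_right_mono) auto
      then show ?thesis by (simp add: algebra_simps)
    qed
    finally have zB: "norm z \<le> r * norm \<theta>s" .
    show "z \<in> D_set \<theta>s a r" unfolding D_set_def H_set_def B_set_def using zH zB by auto
  qed
qed


end
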